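(* The algorithm Balance2 is not competitive for the infinite server problem on the real line.
   Context: Infinite server problem on the real line: an unbounded number of servers initially reside at a source point; a finite sequence of requests is revealed one by one; each must be served immediately, without knowledge of future requests, by moving a server to it; the cost is the total distance traveled. Balance2 serves a request $r$ by moving to $r$ a server $x$ minimizing $D_x+2d(x,r)$, where $D_x$ is the cumulative distance traveled by $x$ so far and $d(x,r)$ is its distance to $r$ (servers still at the source have $D_x=0$). An online algorithm is competitive if there are $\rho,c$ with $ALG(\sigma)\le\rho\,OPT(\sigma)+c$ for all request sequences $\sigma$. *)

theory Defs
  imports Complex_Main
begin

text \<open>A Balance2 state is the list of servers that have been used so far, each given by
  (current position, cumulative distance travelled D). All other (infinitely many)
  servers are still at the source with D = 0; index length st denotes such a fresh server.\<close>

type_synonym bstate = "(real \<times> real) list"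

definition cand :: "bstate \<Rightarrow> real \<Rightarrow> real \<Rightarrow> nat \<Rightarrow> real" where
  "cand st s r i = (if i < length st then snd (st ! i) + 2 * \<bar>fst (st ! i) - r\<bar>
                    else 2 * \<bar>s - r\<bar>)"

definition move_cost :: "bstate \<Rightarrow> real \<Rightarrow> real \<Rightarrow> nat \<Rightarrow> real" where
  "move_cost st s r i = (if i < length st then \<bar>fst (st ! i) - r\<bar> else \<bar>s - r\<bar>)"

definition move_state :: "bstate \<Rightarrow> real \<Rightarrow> real \<Rightarrow> nat \<Rightarrow> bstate" where
  "move_state st s r i = (if i < length st
       then st[i := (r, snd (st ! i) + \<bar>fst (st ! i) - r\<bar>)]
       else st @ [(r, \<bar>s - r\<bar>)])"

text \<open>A (deterministic, history-dependent) tie-breaking policy: given the past requests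
  and the current request it names the server to move.\<close>
type_synonym policy = "real list \<Rightarrow> real \<Rightarrow> nat"

fun bal_exec :: "real \<Rightarrow> policy \<Rightarrow> real list \<Rightarrow> nat \<Rightarrow> bstate \<times> real" where
  "bal_exec s pol \<sigma> 0 = ([], 0)"
| "bal_exec s pol \<sigma> (Suc n) =
     (let (st, c) = bal_exec s pol \<sigma> n; r = \<sigma> ! n; i = pol (take n \<sigma>) r
      in (move_state st s r i, c + move_cost st s r i))"

definition balance2_policy :: "real \<Rightarrow> policy \<Rightarrow> bool" where
  "balance2_policy s pol \<longleftrightarrow>
     (\<forall>\<sigma> n. n < length \<sigma> \<longrightarrow>
        (let st = fst (bal_exec s pol \<sigma> n); r = \<sigma> ! n; i = pol (take n \<sigma>) r
         in i \<le> length st \<and> (\<forall>j \<le> length st. cand st s r i \<le> cand st s r j)))"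

definition balance2_cost :: "real \<Rightarrow> policy \<Rightarrow> real list \<Rightarrow> real" where
  "balance2_cost s pol \<sigma> = snd (bal_exec s pol \<sigma> (length \<sigma>))"

text \<open>Offline solutions: request i is served by server f i (servers indexed by nat, all
  starting at s); the server moves from its previous position to the request.\<close>
definition prev_pos :: "real \<Rightarrow> real list \<Rightarrow> (nat \<Rightarrow> nat) \<Rightarrow> nat \<Rightarrow> real" where
  "prev_pos s \<sigma> f i = (if \<exists>j<i. f j = f i then \<sigma> ! (GREATEST j. j < i \<and> f j = f i) else s)"

definition offline_cost :: "real \<Rightarrow> real list \<Rightarrow> (nat \<Rightarrow> nat) \<Rightarrow> real" where
  "offline_cost s \<sigma> f = (\<Sum>i<length \<sigma>. \<bar>\<sigma> ! i - prev_pos s \<sigma> f i\<bar>)"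

definition opt_cost :: "real \<Rightarrow> real list \<Rightarrow> real" where
  "opt_cost s \<sigma> = Inf (range (offline_cost s \<sigma>))"

end

theory Submission
  imports Defs
begin

lemma even_mod_M: "even (n mod (2*m)) \<longleftrightarrow> even (n::nat)"
  using dvd_mod_iff[of 2 "2*m" n] by simp

lemma qdiv: "(r::nat) < M \<Longrightarrow> (q * M + r) div M = q" by simp
lemma qmod: "(r::nat) < M \<Longrightarrow> (q * M + r) mod M = r" by simp
lemma dm1: "0 < (M::nat) \<Longrightarrow> n mod M + 1 < M \<Longrightarrow> (n+1) div M = n div M \<and> (n+1) mod M = n mod M + 1"
proof -
  assume a: "0 < M" "n mod M + 1 < M"
  have e: "n + 1 = n div M * M + (n mod M + 1)" by simp
  show ?thesis
    apply (subst (1 2) e)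
    using qdiv[OF a(2)] qmod[OF a(2)] by blast
qed
lemma dm2: "0 < (M::nat) \<Longrightarrow> n mod M + 1 = M \<Longrightarrow> (n+1) div M = n div M + 1 \<and> (n+1) mod M = 0"
proof -
  assume a: "0 < M" "n mod M + 1 = M"
  have h: "n div M * M + n mod M = n" by simp
  have h2: "(n div M + 1) * M = n div M * M + M" by (simp add: distrib_right)
  have e: "n + 1 = (n div M + 1) * M + 0" using h h2 a(2) by linarith
  show ?thesis
    apply (subst (1 2) e)
    using qdiv[OF a(1)] qmod[OF a(1)] by blast
qed
definition aa :: "nat \<Rightarrow> nat \<Rightarrow> real" where "aa m k = real m - real k"
definition hh :: "nat \<Rightarrow> nat \<Rightarrow> real" where "hh m k = aa m k / (2 * real m)"
definition bb :: "nat \<Rightarrow> nat \<Rightarrow> real" where "bb m k = aa m k + hh m k"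
definition uu :: "nat \<Rightarrow> nat \<Rightarrow> real" where
  "uu m i = (if even i then aa m (i div (2*m)) else bb m (i div (2*m)))"
definition sig :: "real \<Rightarrow> nat \<Rightarrow> real list" where
  "sig s m = map (\<lambda>i. s + uu m i) [0..<m * (2*m)]"
definition dfin :: "nat \<Rightarrow> nat \<Rightarrow> real" where
  "dfin m k = aa m k + (2 * real m - 1) * hh m k"
definition dead :: "real \<Rightarrow> nat \<Rightarrow> nat \<Rightarrow> bstate" where
  "dead s m k = map (\<lambda>i. (s + bb m i, dfin m i)) [0..<k]"
definition inv_st :: "real \<Rightarrow> nat \<Rightarrow> nat \<Rightarrow> bstate" where
  "inv_st s m n = dead s m (n div (2*m)) @
     (if n mod (2*m) = 0 then [] else
       [(s + uu m (n - 1), aa m (n div (2*m)) + real (n mod (2*m) - 1) * hh m (n div (2*m)))])"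
definition inv_cost :: "nat \<Rightarrow> nat \<Rightarrow> real" where
  "inv_cost m n = (\<Sum>i < n div (2*m). dfin m i) +
     (if n mod (2*m) = 0 then 0 else aa m (n div (2*m)) + real (n mod (2*m) - 1) * hh m (n div (2*m)))"

lemma dead_big:
  assumes "i < k" "k < m" "2 \<le> m"
  shows "dfin m i > 2 * bb m k"
proof -
  have mpos: "real m > 0" using assms by simp
  have "dfin m i = aa m i * (4*real m - 1) / (2*real m)"
    unfolding dfin_def hh_def using mpos by (simp add: field_simps)
  moreover have "2 * bb m k = aa m k * (4*real m + 2) / (2*real m)"
    unfolding bb_def hh_def using mpos by (simp add: field_simps)
  moreover have "aa m i * (4*real m - 1) > aa m k * (4*real m + 2)"
  proof -
    have i1: "aa m i \<ge> aa m k + 1" using assms unfolding aa_def by simp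
    have k1: "aa m k \<le> real m" "aa m k > 0" using assms unfolding aa_def by auto
    have "aa m i * (4*real m - 1) \<ge> (aa m k + 1) * (4*real m - 1)"
      using i1 mpos by (intro mult_right_mono) auto
    moreover have "(aa m k + 1) * (4*real m - 1) > aa m k * (4*real m + 2)"
      using k1 assms by (simp add: algebra_simps)
    ultimately show ?thesis by linarith
  qed
  ultimately show ?thesis using mpos by (simp add: divide_strict_right_mono)
qed

lemma aa_pos: "k < m \<Longrightarrow> aa m k > 0" unfolding aa_def by simp
lemma hh_pos: "k < m \<Longrightarrow> hh m k > 0" unfolding hh_def using aa_pos by simp

lemma uu_le_bb: "k < m \<Longrightarrow> i div (2*m) = k \<Longrightarrow> uu m i \<le> bb m k"
  unfolding uu_def bb_def using hh_pos[of k m] by auto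

lemma len_dead[simp]: "length (dead s m k) = k" unfolding dead_def by simp
lemma nth_dead: "i < k \<Longrightarrow> dead s m k ! i = (s + bb m i, dfin m i)" unfolding dead_def by simp
lemma dead_Suc: "dead s m (Suc k) = dead s m k @ [(s + bb m k, dfin m k)]" unfolding dead_def by simp

lemma uu_diff:
  assumes "n mod (2*m) \<noteq> 0" "0 < m" "n div (2*m) < m"
  shows "\<bar>uu m (n - 1) - uu m n\<bar> = hh m (n div (2*m))"
proof -
  have n0: "n > 0" using assms by (metis mod_0 neq0_conv)
  have e: "n - 1 = n div (2*m) * (2*m) + (n mod (2*m) - 1)"
    using assms(1) by (metis add_diff_assoc div_mult_mod_eq less_one linorder_not_less neq0_conv)
  have l: "n mod (2*m) - 1 < 2*m" proof -
    have "n mod (2*m) < 2*m" using assms(2) by simp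
    thus ?thesis by linarith
  qed
  have d: "(n - 1) div (2*m) = n div (2*m)"
    by (subst e) (rule qdiv[OF l])
  have p: "even (n - 1) \<longleftrightarrow> odd n" using n0 by simp
  have hp: "hh m (n div (2*m)) > 0" using hh_pos assms(3) by blast
  show ?thesis unfolding uu_def d bb_def using p hp by (cases "even n") (auto)
qed

lemma aa_hh: "0 < m \<Longrightarrow> aa m k = 2 * real m * hh m k" unfolding hh_def by simp

lemma k_lt: "n < m * (2*m) \<Longrightarrow> n div (2*m) < (m::nat)"
proof -
  assume a: "n < m * (2*m)"
  have "0 < 2*m" using a by (cases m) auto
  thus ?thesis using div_less_iff_less_mult[of "2*m" n m] a by simp
qed

lemma choice:
  assumes m2: "2 \<le> m" and n: "n < m*(2*m)"
  shows "n div (2*m) \<le> length (inv_st s m n) \<and>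
    (\<forall>j \<le> length (inv_st s m n). j \<noteq> n div (2*m) \<longrightarrow>
       cand (inv_st s m n) s (s + uu m n) (n div (2*m)) < cand (inv_st s m n) s (s + uu m n) j)"
proof -
  define k where "k = n div (2*m)"
  define j0 where "j0 = n mod (2*m)"
  define st where "st = inv_st s m n"
  define r where "r = s + uu m n"
  have m0: "0 < m" using m2 by simp
  have kl: "k < m" unfolding k_def using k_lt[OF n] .
  have j0l: "j0 < 2*m" unfolding j0_def using m0 by simp
  have par: "even j0 \<longleftrightarrow> even n" unfolding j0_def by (rule even_mod_M)
  have hp: "hh m k > 0" using hh_pos[OF kl] .
  have ah: "aa m k = 2 * real m * hh m k" using aa_hh[OF m0] .
  have uk: "uu m n = (if even n then aa m k else bb m k)" unfolding uu_def k_def by simp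
  have upos: "uu m n > 0" using uk aa_pos[OF kl] hp unfolding bb_def by auto
  have deadc: "cand st s r j > 2 * bb m k" if "j < k" for j
  proof -
    have "j < length st" using that unfolding st_def inv_st_def k_def by simp
    moreover have "st ! j = (s + bb m j, dfin m j)"
      using that unfolding st_def inv_st_def k_def by (simp add: nth_append nth_dead)
    ultimately have "cand st s r j = dfin m j + 2 * \<bar>s + bb m j - r\<bar>" unfolding cand_def by simp
    moreover have "dfin m j > 2 * bb m k" using dead_big[OF that kl m2] .
    ultimately show ?thesis
      by (metis abs_ge_zero add_increasing2 less_le_trans mult_nonneg_nonneg zero_le_numeral order_refl)
  qed
  show ?thesis
  proof (cases "j0 = 0")
    case True
    have st: "st = dead s m k" unfolding st_def inv_st_def k_def using True j0_def by simp
    have ck: "cand st s r k = 2 * aa m k"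
      unfolding st cand_def r_def using uk par True aa_pos[OF kl] by simp
    have "cand st s r k < 2 * bb m k" using ck hp unfolding bb_def by simp
    thus ?thesis using deadc st unfolding st_def r_def k_def[symmetric]
      by (metis len_dead order_le_less order_less_trans)
  next
    case False
    have st: "st = dead s m k @ [(s + uu m (n - 1), aa m k + real (j0 - 1) * hh m k)]"
      unfolding st_def inv_st_def k_def j0_def using False j0_def by simp
    have dif: "\<bar>s + uu m (n - 1) - r\<bar> = hh m k"
      unfolding r_def k_def using uu_diff[of n m] False m0 kl j0_def k_def by simp
    have ck: "cand st s r k = aa m k + real (j0 - 1) * hh m k + 2 * hh m k"
      unfolding st cand_def using dif by (simp add: nth_append)
    have cf: "cand st s r (Suc k) = 2 * uu m n"
      unfolding st cand_def r_def using upos by simp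
    have j1: "real (j0 - 1) = real j0 - 1" using False by simp
    have lt1: "cand st s r k < 2 * uu m n"
    proof (cases "even n")
      case True
      have "j0 + 1 \<noteq> 2*m" proof
        assume "j0 + 1 = 2*m"
        hence "odd j0" by presburger
        thus False using True par by simp
      qed
      hence "real j0 + 1 < 2 * real m" using j0l by linarith
      hence "(real j0 + 1) * hh m k < 2 * real m * hh m k" using hp by simp
      thus ?thesis using ck uk True ah j1 by (simp add: algebra_simps)
    next
      case False
      have "real j0 - 1 < 2 * real m" using j0l by linarith
      hence "(real j0 - 1) * hh m k < 2 * real m * hh m k" using hp by simp
      thus ?thesis using ck uk False ah j1 unfolding bb_def by (simp add: algebra_simps)
    qed
    have "uu m n \<le> bb m k" using uk hp unfolding bb_def by auto
    hence lt2: "cand st s r k < 2 * bb m k" using lt1 by linarith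
    have len: "length st = Suc k" using st by simp
    show ?thesis
    proof -
      have "\<forall>j \<le> length st. j \<noteq> k \<longrightarrow> cand st s r k < cand st s r j"
      proof (intro allI impI)
        fix j assume "j \<le> length st" "j \<noteq> k"
        then consider "j < k" | "j = Suc k" using len by linarith
        thus "cand st s r k < cand st s r j"
        proof cases
          case 1
          thus ?thesis using deadc[OF 1] lt2 by linarith
        next
          case 2
          thus ?thesis using lt1 cf by simp
        qed
      qed
      thus ?thesis using len unfolding st_def r_def k_def by simp
    qed
  qed
qed

lemma sig_len[simp]: "length (sig s m) = m*(2*m)" unfolding sig_def by simp
lemma sig_nth: "n < m*(2*m) \<Longrightarrow> sig s m ! n = s + uu m n" unfolding sig_def by simp

lemma invariant:
  assumes pol: "balance2_policy s pol" and m2: "2 \<le> m"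
  shows "n \<le> m*(2*m) \<Longrightarrow> bal_exec s pol (sig s m) n = (inv_st s m n, inv_cost m n)"
proof (induction n)
  case 0
  then show ?case unfolding inv_st_def inv_cost_def dead_def by simp
next
  case (Suc n)
  have n: "n < m*(2*m)" using Suc.prems by simp
  have IH: "bal_exec s pol (sig s m) n = (inv_st s m n, inv_cost m n)" using Suc n by simp
  define k where "k = n div (2*m)"
  define j0 where "j0 = n mod (2*m)"
  define st where "st = inv_st s m n"
  define r where "r = s + uu m n"
  define i where "i = pol (take n (sig s m)) r"
  have m0: "0 < m" using m2 by simp
  have kl: "k < m" unfolding k_def using k_lt[OF n] .
  have M0: "0 < 2*m" using m0 by simp
  have par: "even j0 \<longleftrightarrow> even n" unfolding j0_def by (rule even_mod_M)
  have rn: "sig s m ! n = r" unfolding r_def using sig_nth[OF n] .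
  from pol have "i \<le> length st \<and> (\<forall>j \<le> length st. cand st s r i \<le> cand st s r j)"
    unfolding balance2_policy_def using n IH rn unfolding i_def st_def Let_def
    by (metis fst_conv sig_len)
  moreover have ch: "k \<le> length st \<and> (\<forall>j \<le> length st. j \<noteq> k \<longrightarrow> cand st s r k < cand st s r j)"
    using choice[OF m2 n, of s] unfolding st_def r_def k_def by simp
  ultimately have ik: "i = k" by (meson not_less)
  have step: "bal_exec s pol (sig s m) (Suc n) = (move_state st s r k, inv_cost m n + move_cost st s r k)"
    using IH rn ik unfolding i_def st_def by simp
  have uk: "uu m n = (if even n then aa m k else bb m k)" unfolding uu_def k_def by simp
  have hp: "hh m k > 0" using hh_pos[OF kl] .
  have upos: "uu m n > 0" using uk aa_pos[OF kl] hp unfolding bb_def by auto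
  show ?case
  proof (cases "j0 = 0")
    case True
    have st: "st = dead s m k" unfolding st_def inv_st_def k_def using True j0_def by simp
    have t: "n mod (2*m) + 1 < 2*m" using True m2 unfolding j0_def by simp
    have d: "Suc n div (2*m) = k" "Suc n mod (2*m) = 1"
      using dm1[OF M0 t] True unfolding k_def j0_def by simp_all
    have un: "uu m n = aa m k" using uk par True by simp
    show ?thesis unfolding step
      unfolding st move_state_def move_cost_def inv_st_def inv_cost_def d
      using True j0_def k_def r_def un upos by simp
  next
    case False
    have st: "st = dead s m k @ [(s + uu m (n - 1), aa m k + real (j0 - 1) * hh m k)]"
      unfolding st_def inv_st_def k_def j0_def using False j0_def by simp
    have dif: "\<bar>s + uu m (n - 1) - r\<bar> = hh m k"
      unfolding r_def k_def using uu_diff[of n m] False m0 kl j0_def k_def by simp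
    have ms: "move_state st s r k = dead s m k @ [(r, aa m k + real (j0 - 1) * hh m k + hh m k)]"
      unfolding move_state_def st using dif by (simp add: nth_append list_update_append)
    have mc: "move_cost st s r k = hh m k"
      unfolding move_cost_def st using dif by (simp add: nth_append)
    have ic: "inv_cost m n = (\<Sum>i<k. dfin m i) + (aa m k + real (j0 - 1) * hh m k)"
      unfolding inv_cost_def k_def j0_def using False j0_def by simp
    have j0l: "j0 < 2*m" unfolding j0_def using m0 by simp
    show ?thesis
    proof (cases "j0 + 1 < 2*m")
      case True
      have t: "n mod (2*m) + 1 < 2*m" using True unfolding j0_def by simp
      have d: "Suc n div (2*m) = k" "Suc n mod (2*m) = j0 + 1"
        using dm1[OF M0 t] unfolding k_def j0_def by simp_all
      have j1: "real (j0 + 1 - 1) * hh m k = real (j0 - 1) * hh m k + hh m k"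
        using False by (simp add: algebra_simps of_nat_diff)
      show ?thesis unfolding step ms mc ic
        unfolding inv_st_def inv_cost_def d using j1 r_def by simp
    next
      case False2: False
      have e: "j0 + 1 = 2*m" using False2 j0l by simp
      have t: "n mod (2*m) + 1 = 2*m" using e unfolding j0_def by simp
      have d: "Suc n div (2*m) = Suc k" "Suc n mod (2*m) = 0"
        using dm2[OF M0 t] unfolding k_def j0_def by simp_all
      have "odd j0" using e by presburger
      hence un: "uu m n = bb m k" using uk par by simp
      have jj: "real (j0 - 1) = 2 * real m - 2" using e m2 by (simp add: of_nat_diff)
      have df: "aa m k + real (j0 - 1) * hh m k + hh m k = dfin m k"
        unfolding dfin_def jj by (simp add: algebra_simps)
      show ?thesis unfolding step ms mc ic
        unfolding inv_st_def inv_cost_def d dead_Suc using df un r_def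
        by (simp add: algebra_simps)
    qed
  qed
qed

lemma alg_cost:
  assumes pol: "balance2_policy s pol" and m2: "2 \<le> m"
  shows "balance2_cost s pol (sig s m) = (\<Sum>i<m. dfin m i)"
proof -
  have "bal_exec s pol (sig s m) (m*(2*m)) = (inv_st s m (m*(2*m)), inv_cost m (m*(2*m)))"
    using invariant[OF pol m2] by simp
  moreover have "inv_cost m (m*(2*m)) = (\<Sum>i<m. dfin m i)"
    unfolding inv_cost_def using m2 by simp
  ultimately show ?thesis unfolding balance2_cost_def by simp
qed

lemma sum_real_nat: "(\<Sum>i<m. real i) = real m * (real m - 1) / 2"
  by (induction m) (auto simp: field_simps)

lemma alg_lower:
  assumes m2: "2 \<le> m"
  shows "(\<Sum>i<m. dfin m i) \<ge> real m * (real m + 1) / 2"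
proof -
  have "(\<Sum>i<m. dfin m i) \<ge> (\<Sum>i<m. aa m i)"
  proof (rule sum_mono)
    fix i assume "i \<in> {..<m}"
    hence "hh m i > 0" using hh_pos by simp
    thus "aa m i \<le> dfin m i" unfolding dfin_def using m2 by simp
  qed
  moreover have "(\<Sum>i<m. aa m i) = real m * real m - (\<Sum>i<m. real i)"
    unfolding aa_def by (simp add: sum_subtractf)
  ultimately show ?thesis using sum_real_nat[of m] by (simp add: field_simps)
qed

lemma uu_nonneg: "0 < m \<Longrightarrow> i < m*(2*m) \<Longrightarrow> uu m i \<ge> 0"
proof -
  assume "0 < m" "i < m*(2*m)"
  hence k: "i div (2*m) < m" using k_lt by blast
  show ?thesis using aa_pos[OF k] hh_pos[OF k] unfolding uu_def bb_def by simp
qed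

lemma aa_anti: "k \<le> l \<Longrightarrow> aa m l \<le> aa m k" unfolding aa_def by simp
lemma bb_anti: "0 < m \<Longrightarrow> k \<le> l \<Longrightarrow> bb m l \<le> bb m k"
  unfolding bb_def hh_def aa_def by (simp add: divide_right_mono add_mono)

lemma uu_mono: "0 < m \<Longrightarrow> uu m (i+2) \<le> uu m i"
proof -
  assume m0: "0 < m"
  have d: "i div (2*m) \<le> (i+2) div (2*m)" by (simp add: div_le_mono)
  show ?thesis unfolding uu_def using aa_anti[OF d] bb_anti[OF m0 d] by simp
qed

definition TT :: "nat \<Rightarrow> nat \<Rightarrow> real" where
  "TT m i = (if i < 2 then uu m i else uu m (i - 2) - uu m i)"

lemma tele: "(\<Sum>i<n+2. TT m i) = 2 * uu m 0 + 2 * uu m 1 - uu m n - uu m (n+1)"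
proof (induction n)
  case 0
  then show ?case unfolding TT_def by (simp add: numeral_2_eq_2)
next
  case (Suc n)
  have "(\<Sum>i<Suc n + 2. TT m i) = (\<Sum>i<n+2. TT m i) + TT m (n+2)" by simp
  also have "TT m (n+2) = uu m n - uu m (n+2)" unfolding TT_def by simp
  finally show ?case using Suc by simp
qed

lemma greatest2: "2 \<le> (i::nat) \<Longrightarrow> (GREATEST j. j < i \<and> j mod 2 = i mod 2) = i - 2"
proof (rule Greatest_equality)
  assume i: "2 \<le> i"
  show "i - 2 < i \<and> (i - 2) mod 2 = i mod 2"
  proof
    show "i - 2 < i" using i by simp
    have "i = (i - 2) + 2" using i by simp
    hence "i mod 2 = ((i - 2) + 2) mod 2" by simp
    thus "(i - 2) mod 2 = i mod 2" by simp
  qed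
  fix y assume y: "y < i \<and> y mod 2 = i mod 2"
  show "y \<le> i - 2"
  proof (rule ccontr)
    assume "\<not> y \<le> i - 2"
    hence "i = Suc y" using y by linarith
    thus False using y by (simp add: mod_Suc split: if_splits)
  qed
qed
lemma mod_minus2: "2 \<le> (i::nat) \<Longrightarrow> (i - 2) mod 2 = i mod 2"
proof -
  assume i: "2 \<le> i"
  have "i = (i - 2) + 2" using i by simp
  hence "i mod 2 = ((i - 2) + 2) mod 2" by simp
  thus "(i - 2) mod 2 = i mod 2" by simp
qed

lemma offline_bound:
  assumes m2: "2 \<le> m"
  shows "offline_cost s (sig s m) (\<lambda>i. i mod 2) \<le> 4 * real m + 1"
proof -
  define N where "N = m*(2*m)"
  have m0: "0 < m" using m2 by simp
  have "1 * (2 * 1) \<le> m * (2 * m)" using m2 by (intro mult_le_mono) auto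
  hence "2 \<le> N" unfolding N_def by simp
  then obtain n where nN: "N = n + 2" by (metis le_add_diff_inverse2)
  have term_eq: "\<bar>sig s m ! i - prev_pos s (sig s m) (\<lambda>i. i mod 2) i\<bar> = TT m i" if "i < N" for i
  proof (cases "i < 2")
    case True
    have i01: "i = 0 \<or> i = 1" using True by linarith
    have ne: "\<not> (\<exists>j<i. j mod 2 = i mod 2)" using i01 by auto
    have "prev_pos s (sig s m) (\<lambda>i. i mod 2) i = s" unfolding prev_pos_def by (rule if_not_P[OF ne])
    thus ?thesis using that True uu_nonneg[OF m0, of i] unfolding N_def TT_def
      by (simp add: sig_nth)
  next
    case False
    have "\<exists>j<i. j mod 2 = i mod 2" using False mod_minus2[of i] by (intro exI[of _ "i-2"]) simp
    hence "prev_pos s (sig s m) (\<lambda>i. i mod 2) i = sig s m ! (i - 2)"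
      unfolding prev_pos_def using greatest2[of i] False by simp
    moreover have "sig s m ! (i - 2) = s + uu m (i - 2)" using that unfolding N_def by (simp add: sig_nth)
    moreover have "uu m i \<le> uu m (i-2)"
    proof -
      have "i - 2 + 2 = i" using False by simp
      thus ?thesis using uu_mono[OF m0, of "i-2"] by simp
    qed
    ultimately show ?thesis using that False unfolding N_def TT_def by (simp add: sig_nth)
  qed
  have "offline_cost s (sig s m) (\<lambda>i. i mod 2) = (\<Sum>i<N. TT m i)"
    unfolding offline_cost_def using term_eq unfolding N_def by (simp)
  also have "\<dots> = 2 * uu m 0 + 2 * uu m 1 - uu m n - uu m (n+1)"
    unfolding nN by (rule tele)
  also have "\<dots> \<le> 2 * uu m 0 + 2 * uu m 1"
  proof -
    have "n < m*(2*m)" "n + 1 < m*(2*m)" using nN unfolding N_def by auto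
    thus ?thesis using uu_nonneg[OF m0, of n] uu_nonneg[OF m0, of "n+1"] by linarith
  qed
  also have "uu m 0 = real m" unfolding uu_def aa_def by simp
  also have "uu m 1 = real m + 1/2"
  proof -
    have "(1::nat) div (2*m) = 0" using m2 by simp
    thus ?thesis unfolding uu_def bb_def hh_def aa_def using m0 by simp
  qed
  finally show ?thesis by simp
qed

lemma opt_bounds:
  assumes m2: "2 \<le> m"
  shows "0 \<le> opt_cost s (sig s m) \<and> opt_cost s (sig s m) \<le> 4 * real m + 1"
proof -
  have nn: "\<And>f. 0 \<le> offline_cost s (sig s m) f" unfolding offline_cost_def by (simp add: sum_nonneg)
  have bdd: "bdd_below (range (offline_cost s (sig s m)))" unfolding bdd_below_def using nn by auto
  have "opt_cost s (sig s m) \<le> offline_cost s (sig s m) (\<lambda>i. i mod 2)"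
    unfolding opt_cost_def by (rule cInf_lower[OF _ bdd]) simp
  moreover have "0 \<le> opt_cost s (sig s m)"
    unfolding opt_cost_def by (rule cInf_greatest) (auto simp: nn)
  ultimately show ?thesis using offline_bound[OF m2, of s] by linarith
qed

lemma arith_fin: "8*P + 2*Q + 10*x \<le> (X::real) \<Longrightarrow> b \<le> Q \<Longrightarrow> c \<le> b \<Longrightarrow> a \<le> x \<Longrightarrow> 1 \<le> x \<Longrightarrow> 4*P + a + c < (X + x)/2"
proof -
  assume h: "8*P + 2*Q + 10*x \<le> X" "b \<le> Q" "c \<le> b" "a \<le> x" "1 \<le> x"
  have "8*P + 2*a + 2*c < X + x" using h by linarith
  thus ?thesis by simp
qed

theorem proposition5:
  fixes s :: real and pol :: policy
  assumes "balance2_policy s pol"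
  shows "\<not> (\<exists>\<rho> c. \<forall>\<sigma>. balance2_cost s pol \<sigma> \<le> \<rho> * opt_cost s \<sigma> + c)"
proof
  assume "\<exists>\<rho> c. \<forall>\<sigma>. balance2_cost s pol \<sigma> \<le> \<rho> * opt_cost s \<sigma> + c"
  then obtain \<rho> c where H: "\<And>\<sigma>. balance2_cost s pol \<sigma> \<le> \<rho> * opt_cost s \<sigma> + c" by blast
  define m where "m = nat \<lceil>8 * \<bar>\<rho>\<bar> + 2 * \<bar>c\<bar> + 10\<rceil>"
  define x where "x = real m"
  have xb: "x \<ge> 8 * \<bar>\<rho>\<bar> + 2 * \<bar>c\<bar> + 10" unfolding x_def m_def by linarith
  have m2: "2 \<le> m" using xb unfolding x_def by linarith
  define OP where "OP = opt_cost s (sig s m)"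
  have ob: "0 \<le> OP" "OP \<le> 4 * x + 1" using opt_bounds[OF m2, of s] unfolding OP_def x_def by auto
  have "\<rho> * OP \<le> \<bar>\<rho>\<bar> * OP" using ob(1) by (simp add: mult_right_mono)
  also have "\<dots> \<le> \<bar>\<rho>\<bar> * (4 * x + 1)" using ob by (simp add: mult_left_mono)
  finally have r1: "\<rho> * OP \<le> \<bar>\<rho>\<bar> * (4 * x + 1)" .
  have alg: "balance2_cost s pol (sig s m) \<ge> x * (x + 1) / 2"
    using alg_cost[OF assms m2] alg_lower[OF m2] unfolding x_def by simp
  have x0: "x \<ge> 1" using xb by linarith
  have "x * x \<ge> x * (8 * \<bar>\<rho>\<bar> + 2 * \<bar>c\<bar> + 10)"
    using xb x0 by (intro mult_left_mono) auto
  hence e1: "x * x \<ge> 8 * (\<bar>\<rho>\<bar> * x) + 2 * (\<bar>c\<bar> * x) + 10 * x" by (simp add: algebra_simps)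
  have e2: "\<bar>c\<bar> * x \<ge> \<bar>c\<bar>" using x0 mult_left_mono[OF x0, of "\<bar>c\<bar>"] by simp
  have e3: "c \<le> \<bar>c\<bar>" by simp
  have e4: "\<bar>\<rho>\<bar> \<le> x" using xb by linarith
  define P where "P = \<bar>\<rho>\<bar> * x"
  define Q where "Q = \<bar>c\<bar> * x"
  define X where "X = x * x"
  have f1: "X \<ge> 8 * P + 2 * Q + 10 * x" using e1 unfolding P_def Q_def X_def .
  have f2: "Q \<ge> \<bar>c\<bar>" using e2 unfolding Q_def .
  have f3: "4 * P + \<bar>\<rho>\<bar> + c < (X + x) / 2" by (rule arith_fin[OF f1 f2 e3 e4 x0])
  have "x * (x + 1) / 2 = (X + x) / 2" unfolding X_def by (simp add: algebra_simps)
  moreover have "\<bar>\<rho>\<bar> * (4 * x + 1) + c = 4 * P + \<bar>\<rho>\<bar> + c" unfolding P_def by (simp add: algebra_simps)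
  ultimately have "x * (x + 1) / 2 > \<bar>\<rho>\<bar> * (4 * x + 1) + c"
    using f3 by simp
  thus False using H[of "sig s m"] alg r1 unfolding OP_def by linarith
qed

end
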